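(* Let $\varepsilon>0$ and let $p:=c_3^2/c_2^2$, $c_1^2:=\min\{\varepsilon^2\omega_1/8,\ 1/4\}$, with the constants defined in the context. Let $g:[0,\infty)\to[0,\infty)$ and $\tilde g_1,\tilde g_2:[0,\infty)\times[0,\infty)\to[0,\infty)$ be continuous functions such that each $\tilde g_i(t,\eta)$ is non-decreasing in $\eta$, and such that: (i) there is $\sigma>0$ with $\int_{t_0}^t g(\tau)\,d\tau-p(t-t_0)\le\sigma$ for all $t\ge t_0\ge 0$; (ii) there are constants $\chi\in[0,1]$, $\kappa\in[0,1]$, $q\ge 0$ (with $q<p$ if $\chi=1$) and $M>0$ such that $\left|\frac{\int_0^t g(\tau)d\tau}{1+t^{\chi}}-q\right|<\frac{M}{1+t^{\kappa}}$ for all $t\ge0$; (iii) for every $\eta>0$, $\lim_{t\to+\infty}\tilde g_1(t,\eta)e^{\xi(t^{\chi}-t^{\kappa})}=0$ and $\int_0^\infty \tilde g_2(\tau,\eta)e^{\xi(\tau^{\chi}-\tau^{\kappa})}d\tau<+\infty$, where $\xi$ is some positive constant if $\chi>\kappa$ and $\xi=0$ if $\chi\le\kappa$. Set $g_i(t,\eta):=\tilde g_i(t,\eta/c_1^2)$ and consider the Cauchy problem $$\dot y=-p\,y+g(t)y+g_1(t,y)+g_2(t,y),\qquad y(t_0)=y_0\ge 0.$$ Then for every $\tilde\alpha>0$ there exist $\tilde s(\tilde\alpha)\ge 0$ and $\tilde\beta(\tilde\alpha)>0$ such that whenever $y_0\in[0,\tilde\alpha]$ and $t_0\ge\tilde s(\tilde\alpha)$,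 the solution $y(t;t_0,y_0)$ satisfies $0\le y(t;t_0,y_0)<\tilde\beta(\tilde\alpha)$ for all $t\ge t_0$.
   Context: $\omega_1:=\frac{\pi^4}{1+\pi^4}$, $\omega_2:=\frac{\pi^4}{1+\pi^2+\pi^4}$, $c_3^2:=\frac{\omega_2}{2}\varepsilon$, $c_2^2:=\max\{\varepsilon(1+\varepsilon)/2,\ (2+\varepsilon)/2\}$. *)

theory Defs
  imports "HOL-Analysis.Analysis"
begin

definition omega1 :: real where "omega1 = pi^4 / (1 + pi^4)"
definition omega2 :: real where "omega2 = pi^4 / (1 + pi^2 + pi^4)"

definition c3sq :: "real \<Rightarrow> real" where "c3sq \<epsilon> = omega2 / 2 * \<epsilon>"
definition c2sq :: "real \<Rightarrow> real" where
  "c2sq \<epsilon> = max (\<epsilon> * (1 + \<epsilon>) / 2) ((2 + \<epsilon>) / 2)"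
definition c1sq :: "real \<Rightarrow> real" where
  "c1sq \<epsilon> = min (\<epsilon>^2 * omega1 / 8) (1/4)"
definition pconst :: "real \<Rightarrow> real" where "pconst \<epsilon> = c3sq \<epsilon> / c2sq \<epsilon>"

(* real power t^a for t \<ge> 0 with the convention 0^0 = 1 (Isabelle's powr has 0 powr 0 = 0) *)
definition rpow :: "real \<Rightarrow> real \<Rightarrow> real" where
  "rpow t a = (if t = 0 then (if a = 0 then 1 else 0) else t powr a)"

end

theory Submission
  imports Defs
begin


lemma comparison:
  fixes y g f m :: "real \<Rightarrow> real" and p t0 t1 :: real
  assumes le: "t0 \<le> t1"
    and gc: "continuous_on {t0..t1} g"
    and dy: "\<And>t. t \<in> {t0..t1} \<Longrightarrow>
       (y has_real_derivative (- p * y t + g t * y t + f t)) (at t within {t0..t1})"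
    and mi: "m integrable_on {t0..t1}"
    and fm: "\<And>\<tau>. \<tau> \<in> {t0..t1} \<Longrightarrow> f \<tau> * exp (integral {\<tau>..t1} g - p * (t1 - \<tau>)) \<le> m \<tau>"
  shows "y t1 \<le> exp (integral {t0..t1} g - p * (t1 - t0)) * y t0 + integral {t0..t1} m"
proof -
  define A where "A t = integral {t0..t} g - p * (t - t0)" for t
  have dA: "(A has_real_derivative (g t - p)) (at t within {t0..t1})" if "t \<in> {t0..t1}" for t
    unfolding A_def
    by (auto intro!: derivative_eq_intros integral_has_real_derivative[OF gc that])
  define z where "z t = y t * exp (- A t)" for t
  have dz: "(z has_vector_derivative (f t * exp (- A t))) (at t within {t0..t1})"
    if "t \<in> {t0..t1}" for t
  proof -
    have "(z has_real_derivative ((- p * y t + g t * y t + f t) * exp (- A t) + y t * (exp (- A t) * (- (g t - p)))))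
        (at t within {t0..t1})"
    proof -
      have e: "((\<lambda>t. exp (- A t)) has_real_derivative (exp (- A t) * (- (g t - p)))) (at t within {t0..t1})"
        using dA[OF that] by (auto intro!: derivative_eq_intros)
      show ?thesis unfolding z_def using DERIV_mult[OF dy[OF that] e] by (simp add: mult.commute)
    qed
    moreover have "(- p * y t + g t * y t + f t) * exp (- A t) + y t * (exp (- A t) * (- (g t - p))) = f t * exp (- A t)"
      by (simp add: algebra_simps)
    ultimately show ?thesis by (simp add: has_real_derivative_iff_has_vector_derivative)
  qed
  have hi: "((\<lambda>t. f t * exp (- A t)) has_integral (z t1 - z t0)) {t0..t1}"
    by (rule fundamental_theorem_of_calculus[OF le dz])
  have gi: "g integrable_on {t0..t1}" using gc integrable_continuous_interval by blast
  have comb: "A t1 - A \<tau> = integral {\<tau>..t1} g - p * (t1 - \<tau>)" if "\<tau> \<in> {t0..t1}" for \<tau>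
  proof -
    have "integral {t0..\<tau>} g + integral {\<tau>..t1} g = integral {t0..t1} g"
      using that gi Henstock_Kurzweil_Integration.integral_combine[where a=t0 and c=\<tau> and b=t1 and f=g] by auto
    then show ?thesis unfolding A_def by (simp add: algebra_simps)
  qed
  have mi2: "((\<lambda>t. m t * exp (- A t1)) has_integral (integral {t0..t1} m * exp (- A t1))) {t0..t1}"
    using has_integral_mult_left[OF integrable_integral[OF mi]] by blast
  have "z t1 - z t0 \<le> integral {t0..t1} m * exp (- A t1)"
  proof (rule has_integral_le[OF hi mi2])
    fix \<tau> assume t: "\<tau> \<in> {t0..t1}"
    have "f \<tau> * exp (- A \<tau>) = (f \<tau> * exp (A t1 - A \<tau>)) * exp (- A t1)"
      by (simp add: exp_diff exp_minus field_simps)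
    also have "\<dots> \<le> m \<tau> * exp (- A t1)"
      using fm[OF t] comb[OF t] by simp
    finally show "f \<tau> * exp (- A \<tau>) \<le> m \<tau> * exp (- A t1)" .
  qed
  hence "y t1 * exp (- A t1) \<le> y t0 + integral {t0..t1} m * exp (- A t1)"
    by (simp add: z_def A_def)
  hence "y t1 * exp (- A t1) * exp (A t1) \<le> (y t0 + integral {t0..t1} m * exp (- A t1)) * exp (A t1)"
    by (intro mult_right_mono) auto
  moreover have "y t1 * exp (- A t1) * exp (A t1) = y t1"
    by (simp add: exp_minus)
  moreover have "(y t0 + integral {t0..t1} m * exp (- A t1)) * exp (A t1) = exp (A t1) * y t0 + integral {t0..t1} m"
    by (simp add: exp_minus algebra_simps)
  ultimately have "y t1 \<le> exp (A t1) * y t0 + integral {t0..t1} m"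
    by simp
  thus ?thesis by (simp add: A_def)
qed



lemma tail_small:
  fixes H :: "real \<Rightarrow> real"
  assumes Hi: "H integrable_on {0..}" and Hn: "\<And>t. t \<ge> 0 \<Longrightarrow> H t \<ge> 0" and d: "\<delta> > 0"
  shows "\<exists>s\<ge>1. \<forall>t0 t. s \<le> t0 \<longrightarrow> t0 \<le> t \<longrightarrow> integral {t0..t} H \<le> \<delta>"
proof -
  define I where "I t = integral {0..t} H" for t
  have iab: "H integrable_on {a..b}" if "0 \<le> a" for a b
    using integrable_on_subinterval[OF Hi, of a b] that by auto
  have Ile: "I t \<le> integral {0..} H" if "t \<ge> 0" for t
    unfolding I_def using that
    by (intro integral_subset_le iab Hi) (auto intro: Hn)
  have comb: "I t = I a + integral {a..t} H" if "0 \<le> a" "a \<le> t" for a t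
    unfolding I_def using that iab[of 0 t]
      Henstock_Kurzweil_Integration.integral_combine[where a=0 and c=a and b=t and f=H] by auto
  define L where "L = Sup (I ` {0..})"
  have bdd: "bdd_above (I ` {0..})" using Ile by (auto intro!: bdd_aboveI)
  have "L - \<delta> < L" using d by simp
  then obtain x where x: "x \<in> I ` {0..}" "L - \<delta> < x"
    using less_cSupE[of "L - \<delta>" "I ` {0..}"] unfolding L_def by auto
  then obtain t1 where t1: "t1 \<ge> 0" "L - \<delta> < I t1" by auto
  show ?thesis
  proof (intro exI[of _ "max 1 t1"] conjI allI impI)
    fix t0 t assume a: "max 1 t1 \<le> t0" "t0 \<le> t"
    have "I t \<le> L" unfolding L_def using a t1 by (intro cSup_upper bdd) auto
    moreover have "I t = I t0 + integral {t0..t} H" using a t1 by (intro comb) auto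
    moreover have "I t0 = I t1 + integral {t1..t0} H" using a t1 by (intro comb) auto
    moreover have "integral {t1..t0} H \<ge> 0" using a t1
      by (intro Henstock_Kurzweil_Integration.integral_nonneg iab Hn) auto
    ultimately show "integral {t0..t} H \<le> \<delta>" using t1 by linarith
  qed auto
qed

lemma int_inv_sq:
  fixes t0 t :: real
  assumes "0 < t0" "t0 \<le> t"
  shows "((\<lambda>x. 1 / x^2) has_integral (1/t0 - 1/t)) {t0..t}"
proof -
  have "((\<lambda>x. 1 / x^2) has_integral ((- 1 / t) - (- 1 / t0))) {t0..t}"
  proof (rule fundamental_theorem_of_calculus[OF assms(2)])
    fix x assume x: "x \<in> {t0..t}"
    hence "x > 0" using assms by auto
    hence "((\<lambda>x. - 1 / x) has_real_derivative (1 / x^2)) (at x within {t0..t})"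
      by (auto intro!: derivative_eq_intros simp: power2_eq_square field_simps)
    thus "((\<lambda>x. - 1 / x) has_vector_derivative (1 / x^2)) (at x within {t0..t})"
      by (simp add: has_real_derivative_iff_has_vector_derivative)
  qed
  thus ?thesis by simp
qed

lemma int_exp_decay:
  fixes c t0 t :: real
  assumes "0 < c" "t0 \<le> t"
  shows "((\<lambda>x. exp (- c * (t - x))) has_integral ((1 - exp (- c * (t - t0))) / c)) {t0..t}"
proof -
  have "((\<lambda>x. exp (- c * (t - x))) has_integral (exp (- c * (t - t)) / c - exp (- c * (t - t0)) / c)) {t0..t}"
  proof (rule fundamental_theorem_of_calculus[OF assms(2)])
    fix x assume x: "x \<in> {t0..t}"
    have "((\<lambda>x. exp (- c * (t - x)) / c) has_real_derivative (exp (- c * (t - x)))) (at x within {t0..t})"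
      using assms by (auto intro!: derivative_eq_intros simp: field_simps)
    thus "((\<lambda>x. exp (- c * (t - x)) / c) has_vector_derivative (exp (- c * (t - x)))) (at x within {t0..t})"
      by (simp add: has_real_derivative_iff_has_vector_derivative)
  qed
  thus ?thesis by (simp add: diff_divide_distrib)
qed



lemma absdiv:
  fixes D I q M :: real
  assumes D: "D > 0" and h: "\<bar>I / D - q\<bar> < M / D"
  shows "q * D - M < I \<and> I < q * D + M"
proof -
  have "I / D - q = (I - q * D) / D" using D by (simp add: field_simps)
  hence "\<bar>I - q * D\<bar> / D < M / D" using h D by (simp add: abs_divide)
  hence "\<bar>I - q * D\<bar> < M" using D by (simp add: divide_less_cancel)
  thus ?thesis by linarith
qed


lemma powr_diff_bound:
  fixes X q p :: real
  assumes "0 \<le> X" "X \<le> 1" "q \<ge> 0" "p > 0" "X = 1 \<longrightarrow> q < p"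
  shows "\<exists>c>0. \<exists>s\<ge>1. \<forall>\<tau> t. s \<le> \<tau> \<longrightarrow> \<tau> \<le> t \<longrightarrow> q * (t powr X - \<tau> powr X) \<le> (p - c) * (t - \<tau>)"
proof -
  have "\<exists>c>0. \<exists>s\<ge>1. \<forall>z\<ge>s. q * (X * z powr (X - 1)) \<le> p - c"
  proof (cases "X = 1")
    case True
    show ?thesis by (rule exI[of _ "p - q"]) (use assms True in \<open>auto intro!: exI[of _ 1]\<close>)
  next
    case False
    hence "X - 1 < 0" using assms by auto
    hence "((\<lambda>z::real. z powr (X - 1)) \<longlongrightarrow> 0) at_top"
      by (intro tendsto_neg_powr filterlim_ident)
    hence "((\<lambda>z::real. q * (X * z powr (X - 1))) \<longlongrightarrow> q * (X * 0)) at_top"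
      by (intro tendsto_intros)
    hence "eventually (\<lambda>z. q * (X * z powr (X - 1)) < p / 2) at_top"
      using assms by (intro order_tendstoD(2)) auto
    then obtain N where N: "\<And>z. z \<ge> N \<Longrightarrow> q * (X * z powr (X - 1)) < p / 2"
      by (auto simp: eventually_at_top_linorder)
    have "q * (X * z powr (X - 1)) \<le> p - p / 2" if "z \<ge> max 1 N" for z
      using N[of z] that by simp
    note zz = this
    show ?thesis
      apply (rule exI[of _ "p / 2"])
      apply (rule conjI)
      using assms apply simp
      apply (rule exI[of _ "max 1 N"])
      using zz apply simp
      done
  qed
  then obtain c s where cs: "c > 0" "s \<ge> 1" "\<And>z. z \<ge> s \<Longrightarrow> q * (X * z powr (X - 1)) \<le> p - c"
    by blast
  show ?thesis
  proof (rule exI[of _ c], rule conjI[OF cs(1)], rule exI[of _ s], rule conjI[OF cs(2)], intro allI impI)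
    fix \<tau> t assume a: "s \<le> \<tau>" "\<tau> \<le> t"
    show "q * (t powr X - \<tau> powr X) \<le> (p - c) * (t - \<tau>)"
    proof (cases "\<tau> = t")
      case False
      hence lt: "\<tau> < t" using a by auto
      have "\<exists>z. \<tau> < z \<and> z < t \<and> t powr X - \<tau> powr X = (t - \<tau>) * (X * z powr (X - 1))"
        using a cs(2) by (intro MVT2[OF lt] has_real_derivative_powr) auto
      then obtain z where z: "\<tau> < z" "z < t" "t powr X - \<tau> powr X = (t - \<tau>) * (X * z powr (X - 1))"
        by blast
      have "q * (t powr X - \<tau> powr X) = (t - \<tau>) * (q * (X * z powr (X - 1)))"
        using z(3) by simp
      also have "\<dots> \<le> (t - \<tau>) * (p - c)"
        using cs(3)[of z] z a by (intro mult_left_mono) auto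
      finally show ?thesis by (simp add: mult.commute)
    qed simp
  qed
qed

lemma exp_growth:
  fixes X K \<xi> :: real
  assumes "0 \<le> K" "K < X" "\<xi> > 0"
  shows "\<exists>s\<ge>1. \<forall>\<tau>\<ge>s. \<tau>^2 \<le> exp (\<xi> * (\<tau> powr X - \<tau> powr K))"
proof -
  define d where "d = X - K"
  have d: "d > 0" using assms by (simp add: d_def)
  define U where "U = 1 + 4 / (d * \<xi>)"
  have U: "U \<ge> 1" using d assms by (simp add: U_def)
  show ?thesis
  proof (intro exI[of _ "max 1 (U powr (2 / d))"] conjI allI impI)
    fix \<tau> assume t: "max 1 (U powr (2 / d)) \<le> \<tau>"
    hence t1: "\<tau> \<ge> 1" by simp
    define u where "u = \<tau> powr (d / 2)"
    have "(U powr (2 / d)) powr (d / 2) \<le> \<tau> powr (d / 2)"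
      using t d by (intro powr_mono2) auto
    moreover have "(U powr (2 / d)) powr (d / 2) = U"
      using U d by (simp add: powr_powr)
    ultimately have uU: "u \<ge> U" by (simp add: u_def)
    have u2: "u^2 = \<tau> powr d"
      unfolding u_def power2_eq_square by (simp flip: powr_add)
    have "\<tau> powr X = \<tau> powr K * \<tau> powr d" unfolding d_def by (simp flip: powr_add)
    moreover have "\<tau> powr K \<ge> 1" using t1 assms by (simp add: ge_one_powr_ge_zero)
    moreover have "\<tau> powr d \<ge> 1" using t1 d by (simp add: ge_one_powr_ge_zero)
    ultimately have diff: "\<tau> powr X - \<tau> powr K \<ge> u^2 - 1"
      using u2 mult_right_mono[of 1 "\<tau> powr K" "\<tau> powr d - 1"] by (simp add: algebra_simps)
    have lnu: "ln u = (d / 2) * ln \<tau>" unfolding u_def using t1 by (simp add: ln_powr)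
    have "ln u \<le> u - 1" using uU U by (intro ln_le_minus_one) auto
    hence "2 * ln \<tau> \<le> (4 / d) * (u - 1)" using lnu d by (simp add: field_simps)
    also have "\<dots> \<le> \<xi> * (u + 1) * (u - 1)"
    proof (rule mult_right_mono)
      have "\<xi> * (u + 1) \<ge> \<xi> * U" using uU assms by (intro mult_left_mono) auto
      moreover have "\<xi> * U \<ge> 4 / d" using assms d by (simp add: U_def field_simps)
      ultimately show "4 / d \<le> \<xi> * (u + 1)" by linarith
    qed (use uU U in auto)
    also have "\<dots> = \<xi> * (u^2 - 1)" by (simp add: algebra_simps power2_eq_square)
    also have "\<dots> \<le> \<xi> * (\<tau> powr X - \<tau> powr K)" using diff assms by (intro mult_left_mono) auto
    finally have "exp (2 * ln \<tau>) \<le> exp (\<xi> * (\<tau> powr X - \<tau> powr K))" by simp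
    moreover have "exp (2 * ln \<tau>) = exp (ln (\<tau>^2))" using t1 by (simp add: ln_realpow)
    moreover have "exp (ln (\<tau>^2)) = \<tau>^2" using t1 by simp
    ultimately show "\<tau>^2 \<le> exp (\<xi> * (\<tau> powr X - \<tau> powr K))" by simp
  qed simp
qed


theorem lemma1:
  fixes \<epsilon> \<chi>\<^sub>0 \<kappa>\<^sub>0 q M :: real and g :: "real \<Rightarrow> real" and gt1 gt2 :: "real \<Rightarrow> real \<Rightarrow> real"
  assumes eps: "\<epsilon> > 0"
    and g_cont: "continuous_on {0..} g" and g_nonneg: "\<And>t. t \<ge> 0 \<Longrightarrow> g t \<ge> 0"
    and gt1_cont: "continuous_on ({0..} \<times> {0..}) (\<lambda>(t, \<eta>). gt1 t \<eta>)"
    and gt2_cont: "continuous_on ({0..} \<times> {0..}) (\<lambda>(t, \<eta>). gt2 t \<eta>)"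
    and gt1_nonneg: "\<And>t \<eta>. t \<ge> 0 \<Longrightarrow> \<eta> \<ge> 0 \<Longrightarrow> gt1 t \<eta> \<ge> 0"
    and gt2_nonneg: "\<And>t \<eta>. t \<ge> 0 \<Longrightarrow> \<eta> \<ge> 0 \<Longrightarrow> gt2 t \<eta> \<ge> 0"
    and gt1_mono: "\<And>t \<eta> \<eta>'. t \<ge> 0 \<Longrightarrow> 0 \<le> \<eta> \<Longrightarrow> \<eta> \<le> \<eta>' \<Longrightarrow> gt1 t \<eta> \<le> gt1 t \<eta>'"
    and gt2_mono: "\<And>t \<eta> \<eta>'. t \<ge> 0 \<Longrightarrow> 0 \<le> \<eta> \<Longrightarrow> \<eta> \<le> \<eta>' \<Longrightarrow> gt2 t \<eta> \<le> gt2 t \<eta>'"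
    and cond_i: "\<exists>\<sigma>>0. \<forall>t0 t. 0 \<le> t0 \<longrightarrow> t0 \<le> t \<longrightarrow>
                    integral {t0..t} g - pconst \<epsilon> * (t - t0) \<le> \<sigma>"
    and chi: "0 \<le> \<chi>\<^sub>0" "\<chi>\<^sub>0 \<le> 1" and kappa: "0 \<le> \<kappa>\<^sub>0" "\<kappa>\<^sub>0 \<le> 1"
    and q: "q \<ge> 0" "\<chi>\<^sub>0 = 1 \<longrightarrow> q < pconst \<epsilon>" and M: "M > 0"
    and cond_ii: "\<And>t. t \<ge> 0 \<Longrightarrow>
        \<bar>integral {0..t} g / (1 + rpow t \<chi>\<^sub>0) - q\<bar> < M / (1 + rpow t \<kappa>\<^sub>0)"
    and cond_iii: "\<exists>\<xi>::real. (\<chi>\<^sub>0 > \<kappa>\<^sub>0 \<longrightarrow> \<xi> > 0) \<and> (\<chi>\<^sub>0 \<le> \<kappa>\<^sub>0 \<longrightarrow> \<xi> = 0) \<and>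
        (\<forall>\<eta>>0. ((\<lambda>t. gt1 t \<eta> * exp (\<xi> * (rpow t \<chi>\<^sub>0 - rpow t \<kappa>\<^sub>0))) \<longlongrightarrow> 0) at_top \<and>
                 (\<lambda>\<tau>. gt2 \<tau> \<eta> * exp (\<xi> * (rpow \<tau> \<chi>\<^sub>0 - rpow \<tau> \<kappa>\<^sub>0))) integrable_on {0..})"
  shows "\<forall>\<alpha>>0. \<exists>s\<ge>0. \<exists>\<beta>>0. \<forall>y0 t0 T (y :: real \<Rightarrow> real).
           0 \<le> y0 \<longrightarrow> y0 \<le> \<alpha> \<longrightarrow> s \<le> t0 \<longrightarrow> t0 < T \<longrightarrow> y t0 = y0 \<longrightarrow>
           (\<forall>t\<in>{t0..<T}. y t \<ge> 0 \<and>
              (y has_real_derivative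
                 (- pconst \<epsilon> * y t + g t * y t + gt1 t (y t / c1sq \<epsilon>) + gt2 t (y t / c1sq \<epsilon>)))
                 (at t within {t0..<T})) \<longrightarrow>
           (\<forall>t\<in>{t0..<T}. 0 \<le> y t \<and> y t < \<beta>)"
proof (intro allI impI)
  fix \<alpha> :: real assume \<alpha>: "\<alpha> > 0"
  define p where "p = pconst \<epsilon>"
  have om2: "omega2 > 0" unfolding omega2_def by (simp add: add_pos_pos)
  have c2: "c2sq \<epsilon> > 0" unfolding c2sq_def using eps by (simp add: less_max_iff_disj)
  have p: "p > 0" unfolding p_def pconst_def c3sq_def using om2 c2 eps by simp
  define c where "c = c1sq \<epsilon>"
  have om1: "omega1 > 0" unfolding omega1_def by (simp add: add_pos_pos)
  have c: "c > 0" unfolding c_def c1sq_def using om1 eps by simp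
  obtain \<sigma> where \<sigma>: "\<sigma> > 0" and \<sigma>b: "\<And>t0 t. 0 \<le> t0 \<Longrightarrow> t0 \<le> t \<Longrightarrow> integral {t0..t} g - p * (t - t0) \<le> \<sigma>"
    using cond_i unfolding p_def by blast
  obtain \<xi> where \<xi>1: "\<chi>\<^sub>0 > \<kappa>\<^sub>0 \<longrightarrow> \<xi> > 0" and \<xi>2: "\<chi>\<^sub>0 \<le> \<kappa>\<^sub>0 \<longrightarrow> \<xi> = 0"
    and \<xi>3: "\<And>\<eta>. \<eta> > 0 \<Longrightarrow> ((\<lambda>t. gt1 t \<eta> * exp (\<xi> * (rpow t \<chi>\<^sub>0 - rpow t \<kappa>\<^sub>0))) \<longlongrightarrow> 0) at_top"
    and \<xi>4: "\<And>\<eta>. \<eta> > 0 \<Longrightarrow> (\<lambda>\<tau>. gt2 \<tau> \<eta> * exp (\<xi> * (rpow \<tau> \<chi>\<^sub>0 - rpow \<tau> \<kappa>\<^sub>0))) integrable_on {0..}"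
    using cond_iii by blast
  define \<beta> where "\<beta> = exp \<sigma> * \<alpha> + 1"
  have \<beta>: "\<beta> > 0" unfolding \<beta>_def using \<alpha> by (simp add: add_pos_pos)
  define \<eta> where "\<eta> = \<beta> / c"
  have \<eta>: "\<eta> > 0" unfolding \<eta>_def using \<beta> c by simp
  define E where "E \<tau> = exp (\<xi> * (rpow \<tau> \<chi>\<^sub>0 - rpow \<tau> \<kappa>\<^sub>0))" for \<tau>
  have rp: "rpow \<tau> a = \<tau> powr a" if "\<tau> \<ge> 1" for \<tau> a using that by (simp add: rpow_def)
  have E1: "E \<tau> \<ge> 1" if "\<tau> \<ge> 1" for \<tau>
  proof (cases "\<chi>\<^sub>0 > \<kappa>\<^sub>0")
    case True
    have "\<tau> powr \<kappa>\<^sub>0 \<le> \<tau> powr \<chi>\<^sub>0" using True that by (intro powr_mono) auto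
    thus ?thesis using \<xi>1 True that unfolding E_def by (simp add: rp)
  next
    case False
    thus ?thesis using \<xi>2 unfolding E_def by simp
  qed
  have Kb: "exp (integral {\<tau>..t1} g - p * (t1 - \<tau>)) \<le> exp \<sigma>" if "0 \<le> \<tau>" "\<tau> \<le> t1" for \<tau> t1
    using \<sigma>b[OF that] by simp
  define H where "H \<tau> = gt2 \<tau> \<eta> * E \<tau>" for \<tau>
  have Hi: "H integrable_on {0..}" unfolding H_def E_def using \<xi>4[OF \<eta>] .
  have Hn: "H \<tau> \<ge> 0" if "\<tau> \<ge> 0" for \<tau> unfolding H_def E_def using gt2_nonneg[OF that, of \<eta>] \<eta> by simp
  obtain s2 where s2: "s2 \<ge> 1" "\<And>t0 t. s2 \<le> t0 \<Longrightarrow> t0 \<le> t \<Longrightarrow> integral {t0..t} H \<le> exp (- \<sigma>) / 4"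
    using tail_small[OF Hi Hn, of "exp (- \<sigma>) / 4"] by auto
  have F1: "\<exists>s1\<ge>1. \<forall>t0 t1. s1 \<le> t0 \<longrightarrow> t0 \<le> t1 \<longrightarrow> (\<exists>m. m integrable_on {t0..t1} \<and>
      integral {t0..t1} m \<le> 1/4 \<and>
      (\<forall>\<tau>\<in>{t0..t1}. gt1 \<tau> \<eta> * exp (integral {\<tau>..t1} g - p * (t1 - \<tau>)) \<le> m \<tau>))"
  proof (cases "\<chi>\<^sub>0 > \<kappa>\<^sub>0")
    case True
    have \<xi>p: "\<xi> > 0" using \<xi>1 True by simp
    define \<delta> where "\<delta> = exp (- \<sigma>) / 4"
    have \<delta>: "\<delta> > 0" unfolding \<delta>_def by simp
    have "eventually (\<lambda>t. gt1 t \<eta> * E t < \<delta>) at_top"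
      using order_tendstoD(2)[OF \<xi>3[OF \<eta>, folded E_def] \<delta>] by simp
    then obtain N where N: "\<And>t. t \<ge> N \<Longrightarrow> gt1 t \<eta> * E t < \<delta>"
      by (auto simp: eventually_at_top_linorder)
    obtain s' where s': "s' \<ge> 1" "\<And>\<tau>. \<tau> \<ge> s' \<Longrightarrow> \<tau>^2 \<le> exp (\<xi> * (\<tau> powr \<chi>\<^sub>0 - \<tau> powr \<kappa>\<^sub>0))"
      using exp_growth[OF kappa(1) True \<xi>p] by blast
    show ?thesis
    proof (rule exI[of _ "max (max 1 N) s'"], intro conjI allI impI)
      fix t0 t1 assume a: "max (max 1 N) s' \<le> t0" "t0 \<le> t1"
      define m where "m \<tau> = exp \<sigma> * \<delta> * (1 / \<tau>^2)" for \<tau>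
      have t0p: "t0 > 0" using a by simp
      have hm: "(m has_integral (exp \<sigma> * \<delta> * (1/t0 - 1/t1))) {t0..t1}"
        unfolding m_def using has_integral_mult_right[OF int_inv_sq[OF t0p a(2)]] by simp
      show "\<exists>m. m integrable_on {t0..t1} \<and> integral {t0..t1} m \<le> 1/4 \<and>
        (\<forall>\<tau>\<in>{t0..t1}. gt1 \<tau> \<eta> * exp (integral {\<tau>..t1} g - p * (t1 - \<tau>)) \<le> m \<tau>)"
      proof (intro exI[of _ m] conjI ballI)
        show "m integrable_on {t0..t1}" using hm by blast
        have h1: "1/t0 \<le> 1" using a by simp
        have h2: "1/t1 \<ge> 0" using a by simp
        have "1/t0 - 1/t1 \<le> 1" using h1 h2 by linarith
        hence "exp \<sigma> * \<delta> * (1/t0 - 1/t1) \<le> exp \<sigma> * \<delta> * 1"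
          using \<delta> by (intro mult_left_mono) auto
        also have "\<dots> = 1/4" unfolding \<delta>_def by (simp add: exp_minus)
        finally show "integral {t0..t1} m \<le> 1/4" using integral_unique[OF hm] by simp
      next
        fix \<tau> assume t: "\<tau> \<in> {t0..t1}"
        have t1': "\<tau> \<ge> 1" "\<tau> \<ge> N" "\<tau> \<ge> s'" using t a by auto
        have g1n: "gt1 \<tau> \<eta> \<ge> 0" using gt1_nonneg[of \<tau> \<eta>] t1' \<eta> by simp
        have "gt1 \<tau> \<eta> * exp (integral {\<tau>..t1} g - p * (t1 - \<tau>)) \<le> gt1 \<tau> \<eta> * exp \<sigma>"
          using Kb[of \<tau> t1] t t1' g1n by (intro mult_left_mono) auto
        also have "gt1 \<tau> \<eta> \<le> \<delta> * (1 / \<tau>^2)"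
        proof -
          have "E \<tau> = exp (\<xi> * (\<tau> powr \<chi>\<^sub>0 - \<tau> powr \<kappa>\<^sub>0))" unfolding E_def using t1' by (simp add: rp)
          hence "\<tau>^2 \<le> E \<tau>" using s'(2)[of \<tau>] t1' by simp
          hence "gt1 \<tau> \<eta> * \<tau>^2 \<le> gt1 \<tau> \<eta> * E \<tau>" using g1n by (intro mult_left_mono)
          also have "\<dots> < \<delta>" using N t1' by simp
          finally have "gt1 \<tau> \<eta> * \<tau>^2 < \<delta>" .
          thus ?thesis using t1' by (simp add: field_simps)
        qed
        hence "gt1 \<tau> \<eta> * exp \<sigma> \<le> \<delta> * (1 / \<tau>^2) * exp \<sigma>" by (intro mult_right_mono) auto
        finally show "gt1 \<tau> \<eta> * exp (integral {\<tau>..t1} g - p * (t1 - \<tau>)) \<le> m \<tau>"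
          unfolding m_def by (simp add: algebra_simps)
      qed
    qed (simp)
  next
    case False
    hence \<xi>0: "\<xi> = 0" using \<xi>2 by simp
    obtain c0 s3 where c0: "c0 > 0" and s3: "s3 \<ge> 1"
      and pd: "\<And>\<tau> t. s3 \<le> \<tau> \<Longrightarrow> \<tau> \<le> t \<Longrightarrow> q * (t powr \<chi>\<^sub>0 - \<tau> powr \<chi>\<^sub>0) \<le> (p - c0) * (t - \<tau>)"
      using powr_diff_bound[OF chi q(1) p q(2)[folded p_def]] by blast
    define \<delta> where "\<delta> = c0 * exp (- (2 * M)) / 4"
    have \<delta>: "\<delta> > 0" unfolding \<delta>_def using c0 by simp
    have "((\<lambda>t. gt1 t \<eta>) \<longlongrightarrow> 0) at_top" using \<xi>3[OF \<eta>] \<xi>0 by simp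
    hence "eventually (\<lambda>t. gt1 t \<eta> < \<delta>) at_top"
      using order_tendstoD(2)[OF _ \<delta>] by blast
    then obtain N where N: "\<And>t. t \<ge> N \<Longrightarrow> gt1 t \<eta> < \<delta>"
      by (auto simp: eventually_at_top_linorder)
    have Ib: "q * (1 + t powr \<chi>\<^sub>0) - M < integral {0..t} g \<and> integral {0..t} g < q * (1 + t powr \<chi>\<^sub>0) + M"
      if t: "t \<ge> 1" for t
    proof -
      have r: "t powr \<chi>\<^sub>0 \<le> t powr \<kappa>\<^sub>0" using False t by (intro powr_mono) auto
      have pos: "1 + t powr \<chi>\<^sub>0 > 0" by (simp add: add_pos_nonneg)
      have "\<bar>integral {0..t} g / (1 + rpow t \<chi>\<^sub>0) - q\<bar> < M / (1 + rpow t \<kappa>\<^sub>0)"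
        by (rule cond_ii) (use t in simp)
      hence h1: "\<bar>integral {0..t} g / (1 + t powr \<chi>\<^sub>0) - q\<bar> < M / (1 + t powr \<kappa>\<^sub>0)"
        by (simp only: rp[OF t])
      have h2: "M / (1 + t powr \<kappa>\<^sub>0) \<le> M / (1 + t powr \<chi>\<^sub>0)"
        by (rule divide_left_mono) (use M r pos in \<open>auto intro!: mult_pos_pos add_pos_nonneg\<close>)
      have "\<bar>integral {0..t} g / (1 + t powr \<chi>\<^sub>0) - q\<bar> < M / (1 + t powr \<chi>\<^sub>0)"
        using h1 h2 by linarith
      from absdiv[OF pos this] have "q * (1 + t powr \<chi>\<^sub>0) - M < integral {0..t} g \<and> integral {0..t} g < q * (1 + t powr \<chi>\<^sub>0) + M" .
      thus ?thesis by linarith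
    qed
    have kern: "integral {\<tau>..t1} g - p * (t1 - \<tau>) \<le> 2 * M - c0 * (t1 - \<tau>)"
      if a: "s3 \<le> \<tau>" "\<tau> \<le> t1" for \<tau> t1
    proof -
      have gi: "g integrable_on {0..t1}" using a s3
        by (intro integrable_continuous_interval continuous_on_subset[OF g_cont]) auto
      have "integral {0..\<tau>} g + integral {\<tau>..t1} g = integral {0..t1} g"
        using a s3 gi Henstock_Kurzweil_Integration.integral_combine[where a=0 and c=\<tau> and b=t1 and f=g] by auto
      moreover have "q * (1 + \<tau> powr \<chi>\<^sub>0) - M < integral {0..\<tau>} g" using Ib[of \<tau>] a s3 by simp
      moreover have "integral {0..t1} g < q * (1 + t1 powr \<chi>\<^sub>0) + M" using Ib[of t1] a s3 by simp
      moreover have "q * (t1 powr \<chi>\<^sub>0 - \<tau> powr \<chi>\<^sub>0) \<le> (p - c0) * (t1 - \<tau>)" using pd a by simp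
      ultimately show ?thesis by (simp add: algebra_simps)
    qed
    show ?thesis
    proof (rule exI[of _ "max (max 1 N) s3"], intro conjI allI impI)
      fix t0 t1 assume a: "max (max 1 N) s3 \<le> t0" "t0 \<le> t1"
      define m where "m \<tau> = \<delta> * exp (2 * M) * exp (- c0 * (t1 - \<tau>))" for \<tau>
      have hm: "(m has_integral (\<delta> * exp (2 * M) * ((1 - exp (- c0 * (t1 - t0))) / c0))) {t0..t1}"
        unfolding m_def using has_integral_mult_right[OF int_exp_decay[OF c0 a(2)]] by simp
      show "\<exists>m. m integrable_on {t0..t1} \<and> integral {t0..t1} m \<le> 1/4 \<and>
        (\<forall>\<tau>\<in>{t0..t1}. gt1 \<tau> \<eta> * exp (integral {\<tau>..t1} g - p * (t1 - \<tau>)) \<le> m \<tau>)"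
      proof (intro exI[of _ m] conjI ballI)
        show "m integrable_on {t0..t1}" using hm by blast
        have "(1 - exp (- c0 * (t1 - t0))) / c0 \<le> 1 / c0" using c0 by (intro divide_right_mono) auto
        hence "\<delta> * exp (2 * M) * ((1 - exp (- c0 * (t1 - t0))) / c0) \<le> \<delta> * exp (2 * M) * (1 / c0)"
          using \<delta> by (intro mult_left_mono) auto
        also have "\<dots> = 1/4" unfolding \<delta>_def using c0 by (simp add: exp_minus)
        finally show "integral {t0..t1} m \<le> 1/4" using integral_unique[OF hm] by simp
      next
        fix \<tau> assume t: "\<tau> \<in> {t0..t1}"
        have t1': "\<tau> \<ge> 1" "\<tau> \<ge> N" "\<tau> \<ge> s3" using t a by auto
        have g1n: "gt1 \<tau> \<eta> \<ge> 0" using gt1_nonneg[of \<tau> \<eta>] t1' \<eta> by simp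
        have "gt1 \<tau> \<eta> * exp (integral {\<tau>..t1} g - p * (t1 - \<tau>)) \<le> gt1 \<tau> \<eta> * exp (2 * M - c0 * (t1 - \<tau>))"
          using kern[of \<tau> t1] t t1' g1n by (intro mult_left_mono) auto
        also have "\<dots> \<le> \<delta> * exp (2 * M - c0 * (t1 - \<tau>))"
          using N[of \<tau>] t1' by (intro mult_right_mono) auto
        finally show "gt1 \<tau> \<eta> * exp (integral {\<tau>..t1} g - p * (t1 - \<tau>)) \<le> m \<tau>"
          unfolding m_def by (simp add: mult.assoc flip: exp_add)
      qed
    qed (simp)
  qed
  then obtain s1 where s1: "s1 \<ge> 1" and F1s: "\<And>t0 t1. s1 \<le> t0 \<Longrightarrow> t0 \<le> t1 \<Longrightarrow> (\<exists>m. m integrable_on {t0..t1} \<and>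
      integral {t0..t1} m \<le> 1/4 \<and>
      (\<forall>\<tau>\<in>{t0..t1}. gt1 \<tau> \<eta> * exp (integral {\<tau>..t1} g - p * (t1 - \<tau>)) \<le> m \<tau>))"
    by blast
  show "\<exists>s\<ge>0. \<exists>\<beta>>0. \<forall>y0 t0 T (y :: real \<Rightarrow> real).
           0 \<le> y0 \<longrightarrow> y0 \<le> \<alpha> \<longrightarrow> s \<le> t0 \<longrightarrow> t0 < T \<longrightarrow> y t0 = y0 \<longrightarrow>
           (\<forall>t\<in>{t0..<T}. y t \<ge> 0 \<and>
              (y has_real_derivative
                 (- pconst \<epsilon> * y t + g t * y t + gt1 t (y t / c1sq \<epsilon>) + gt2 t (y t / c1sq \<epsilon>)))
                 (at t within {t0..<T})) \<longrightarrow>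
           (\<forall>t\<in>{t0..<T}. 0 \<le> y t \<and> y t < \<beta>)"
  proof (rule exI[of _ "max s1 s2"], rule conjI, use s1 in simp, rule exI[of _ \<beta>], rule conjI[OF \<beta>], intro allI impI)
    fix y0 t0 T and y :: "real \<Rightarrow> real"
    assume y0: "0 \<le> y0" "y0 \<le> \<alpha>" and st: "max s1 s2 \<le> t0" and T: "t0 < T" and yt0: "y t0 = y0"
      and hyp: "\<forall>t\<in>{t0..<T}. y t \<ge> 0 \<and>
              (y has_real_derivative
                 (- pconst \<epsilon> * y t + g t * y t + gt1 t (y t / c1sq \<epsilon>) + gt2 t (y t / c1sq \<epsilon>)))
                 (at t within {t0..<T})"
    define f where "f t = gt1 t (y t / c) + gt2 t (y t / c)" for t
    have t0p: "t0 \<ge> 1" using st s1 by simp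
    have ynn: "y t \<ge> 0" if "t \<in> {t0..<T}" for t using hyp that by blast
    have dyT: "(y has_real_derivative (- p * y t + g t * y t + f t)) (at t within {t0..<T})"
      if "t \<in> {t0..<T}" for t
      using hyp that unfolding f_def p_def c_def by (simp add: add.assoc)
    have ycont: "continuous_on {t0..t1} y" if "t1 \<in> {t0..<T}" for t1
    proof -
      have "continuous (at t within {t0..t1}) y" if "t \<in> {t0..t1}" for t
      proof -
        have "t \<in> {t0..<T}" using that \<open>t1 \<in> {t0..<T}\<close> by auto
        hence "continuous (at t within {t0..<T}) y" using DERIV_continuous[OF dyT] by blast
        thus ?thesis by (rule continuous_within_subset) (use \<open>t1 \<in> {t0..<T}\<close> in auto)
      qed
      thus ?thesis by (simp add: continuous_on_eq_continuous_within)
    qed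
    have claim: "y t1 \<le> exp \<sigma> * \<alpha> + 1/2"
      if t1: "t1 \<in> {t0..<T}" and yb: "\<And>\<tau>. \<tau> \<in> {t0..t1} \<Longrightarrow> y \<tau> \<le> \<beta>" for t1
    proof -
      have le: "t0 \<le> t1" using t1 by simp
      obtain m1 where m1i: "m1 integrable_on {t0..t1}" and m1I: "integral {t0..t1} m1 \<le> 1/4"
        and m1b: "\<And>\<tau>. \<tau> \<in> {t0..t1} \<Longrightarrow> gt1 \<tau> \<eta> * exp (integral {\<tau>..t1} g - p * (t1 - \<tau>)) \<le> m1 \<tau>"
        using F1s[of t0 t1] st le by auto
      define m where "m \<tau> = m1 \<tau> + exp \<sigma> * H \<tau>" for \<tau>
      have Hi': "H integrable_on {t0..t1}" using integrable_on_subinterval[OF Hi, of t0 t1] t0p by auto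
      have mi: "m integrable_on {t0..t1}" unfolding m_def using m1i Hi' by (intro integrable_add integrable_on_mult_right)
      have mI: "integral {t0..t1} m = integral {t0..t1} m1 + exp \<sigma> * integral {t0..t1} H"
        unfolding m_def using m1i Hi' by (simp add: integral_add integrable_on_mult_right)
      have HI: "integral {t0..t1} H \<le> exp (- \<sigma>) / 4" using s2(2)[of t0 t1] st le by simp
      have "exp \<sigma> * integral {t0..t1} H \<le> exp \<sigma> * (exp (- \<sigma>) / 4)" using HI by (intro mult_left_mono) auto
      also have "\<dots> = 1/4" by (simp add: exp_minus)
      finally have mI2: "integral {t0..t1} m \<le> 1/2" using mI m1I by linarith
      have cmp: "y t1 \<le> exp (integral {t0..t1} g - p * (t1 - t0)) * y t0 + integral {t0..t1} m"
      proof (rule comparison[OF le])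
        show "continuous_on {t0..t1} g" using t0p by (intro continuous_on_subset[OF g_cont]) auto
        show "(y has_real_derivative (- p * y t + g t * y t + f t)) (at t within {t0..t1})"
          if "t \<in> {t0..t1}" for t
          using that t1 by (intro has_field_derivative_subset[OF dyT]) auto
        show "m integrable_on {t0..t1}" by (rule mi)
      next
        fix \<tau> assume t: "\<tau> \<in> {t0..t1}"
        have tT: "\<tau> \<in> {t0..<T}" using t t1 by auto
        have t0': "\<tau> \<ge> 1" using t t0p by auto
        have yc: "0 \<le> y \<tau> / c" "y \<tau> / c \<le> \<eta>"
          using ynn[OF tT] yb[OF t] c unfolding \<eta>_def by (auto simp: divide_right_mono)
        have fle: "f \<tau> \<le> gt1 \<tau> \<eta> + gt2 \<tau> \<eta>"
          unfolding f_def using gt1_mono[of \<tau> "y \<tau> / c" \<eta>] gt2_mono[of \<tau> "y \<tau> / c" \<eta>] yc t0' by simp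
        define K where "K = exp (integral {\<tau>..t1} g - p * (t1 - \<tau>))"
        have K0: "K \<ge> 0" unfolding K_def by simp
        have KS: "K \<le> exp \<sigma>" unfolding K_def using Kb[of \<tau> t1] t t0' by simp
        have g2n: "gt2 \<tau> \<eta> \<ge> 0" using gt2_nonneg[of \<tau> \<eta>] t0' \<eta> by simp
        have "f \<tau> * K \<le> (gt1 \<tau> \<eta> + gt2 \<tau> \<eta>) * K" using fle K0 by (intro mult_right_mono)
        also have "\<dots> = gt1 \<tau> \<eta> * K + gt2 \<tau> \<eta> * K" by (simp add: algebra_simps)
        also have "gt1 \<tau> \<eta> * K \<le> m1 \<tau>" using m1b[OF t] unfolding K_def .
        also have "gt2 \<tau> \<eta> * K \<le> gt2 \<tau> \<eta> * exp \<sigma>" using KS g2n by (intro mult_left_mono)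
        also have "gt2 \<tau> \<eta> \<le> H \<tau>" unfolding H_def using E1[OF t0'] g2n
          using mult_left_mono[of 1 "E \<tau>" "gt2 \<tau> \<eta>"] by simp
        hence "gt2 \<tau> \<eta> * exp \<sigma> \<le> H \<tau> * exp \<sigma>" by (intro mult_right_mono) auto
        finally show "f \<tau> * exp (integral {\<tau>..t1} g - p * (t1 - \<tau>)) \<le> m \<tau>"
          unfolding m_def K_def by (simp add: algebra_simps)
      qed
      have "exp (integral {t0..t1} g - p * (t1 - t0)) * y t0 \<le> exp \<sigma> * \<alpha>"
        using Kb[of t0 t1] le t0p yt0 y0 by (intro mult_mono) auto
      thus ?thesis using cmp mI2 by linarith
    qed
    show "\<forall>t\<in>{t0..<T}. 0 \<le> y t \<and> y t < \<beta>"
    proof (rule ccontr)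
      assume "\<not> (\<forall>t\<in>{t0..<T}. 0 \<le> y t \<and> y t < \<beta>)"
      then obtain t1 where t1: "t1 \<in> {t0..<T}" and yt1: "y t1 \<ge> \<beta>" using ynn by force
      have y0b: "y t0 < \<beta>"
      proof -
        have "1 \<le> exp \<sigma>" using \<sigma> by simp
        hence "1 * \<alpha> \<le> exp \<sigma> * \<alpha>" using \<alpha> by (intro mult_right_mono) auto
        thus ?thesis using yt0 y0 by (simp add: \<beta>_def)
      qed
      define S where "S = {t0..t1} \<inter> y -` {\<beta>}"
      have Sc: "closed S" unfolding S_def by (intro continuous_closed_preimage ycont[OF t1]) auto
      have ivt: "\<exists>x. t0 \<le> x \<and> x \<le> b \<and> y x = \<beta>" if "b \<in> {t0..t1}" "y b \<ge> \<beta>" for b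
      proof (rule IVT')
        show "continuous_on {t0..b} y" using that by (intro continuous_on_subset[OF ycont[OF t1]]) auto
      qed (use that y0b in auto)
      have Sne: "S \<noteq> {}" using ivt[of t1] t1 yt1 unfolding S_def by auto
      have Sb: "bdd_below S" unfolding S_def by (auto intro!: bdd_belowI[of _ t0])
      define ts where "ts = Inf S"
      have tsS: "ts \<in> S" unfolding ts_def by (rule closed_contains_Inf[OF Sne Sb Sc])
      have ts: "ts \<in> {t0..<T}" "y ts = \<beta>" using tsS t1 unfolding S_def by auto
      have "y \<tau> \<le> \<beta>" if \<tau>: "\<tau> \<in> {t0..ts}" for \<tau>
      proof (rule ccontr)
        assume "\<not> y \<tau> \<le> \<beta>"
        hence "y \<tau> \<ge> \<beta>" by simp
        moreover have "\<tau> \<in> {t0..t1}" using \<tau> tsS unfolding S_def by auto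
        ultimately obtain x where x: "t0 \<le> x" "x \<le> \<tau>" "y x = \<beta>" using ivt by blast
        have "x \<in> S" using x \<open>\<tau> \<in> {t0..t1}\<close> unfolding S_def by auto
        hence "ts \<le> x" unfolding ts_def by (rule cInf_lower[OF _ Sb])
        hence "\<tau> = ts" using x \<tau> by auto
        thus False using \<open>\<not> y \<tau> \<le> \<beta>\<close> ts by simp
      qed
      hence "y ts \<le> exp \<sigma> * \<alpha> + 1/2" by (intro claim[OF ts(1)])
      thus False using ts unfolding \<beta>_def by simp
    qed
  qed
qed

end
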